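(* Let $p\geq 5$ be a prime and let $r$ be a positive integer such that $3$ does not divide $p^{r}+1$. Then $A(x)=x^{p^r+2}$ is an Alltop function on $\mathbb{F}_{p^{2r}}$.
   Context: For a function $f:\mathbb{F}_{p^n}\to\mathbb{F}_{p^n}$ and $a\in\mathbb{F}_{p^n}$, the difference function is $\Delta_{f,a}(x)=f(x+a)-f(x)$. A function $f:\mathbb{F}_{p^n}\to\mathbb{F}_{p^n}$ is planar if for every $a\in\mathbb{F}_{p^n}^*$ the map $x\mapsto\Delta_{f,a}(x)$ is a bijection of $\mathbb{F}_{p^n}$. A function $A:\mathbb{F}_{p^n}\to\mathbb{F}_{p^n}$ is an Alltop function if $\Delta_{A,a}$ is a planar function for every $a\in\mathbb{F}_{p^n}^*$. *)

theory Defs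
  imports Main "HOL-Computational_Algebra.Primes"
begin

definition diff_fun :: "('a::ring \<Rightarrow> 'a) \<Rightarrow> 'a \<Rightarrow> 'a \<Rightarrow> 'a" where
  "diff_fun f a = (\<lambda>x. f (x + a) - f x)"

definition planar :: "('a::ring \<Rightarrow> 'a) \<Rightarrow> bool" where
  "planar f \<longleftrightarrow> (\<forall>a. a \<noteq> 0 \<longrightarrow> bij (diff_fun f a))"

definition alltop :: "('a::ring \<Rightarrow> 'a) \<Rightarrow> bool" where
  "alltop A \<longleftrightarrow> (\<forall>a. a \<noteq> 0 \<longrightarrow> planar (diff_fun A a))"

end

theory Submission
  imports Defs "HOL-Number_Theory.Residues"
begin

lemma field_pow_card:
  fixes x :: "'a::{field,finite}"
  shows "x ^ card (UNIV :: 'a set) = x"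
proof (cases "x = 0")
  case False
  have "x * (\<Prod>y\<in>UNIV-{0}. x * y) = x * x ^ (card (UNIV :: 'a set) - 1) * \<Prod>(UNIV-{0})"
    by (simp add: prod.distrib mult_ac)
  also have "x * x ^ (card (UNIV :: 'a set) - 1) = x ^ Suc (card (UNIV :: 'a set) - 1)"
    by (subst power_Suc) auto
  also have "Suc (card (UNIV :: 'a set) - 1) = card (UNIV :: 'a set)"
    using finite_UNIV_card_ge_0[where ?'a = 'a] by simp
  also have "(\<Prod>y\<in>UNIV-{0}. x * y) = (\<Prod>y\<in>UNIV-{0}. y)"
    by (rule prod.reindex_bij_witness[of _ "\<lambda>y. y / x" "\<lambda>y. x * y"]) (use False in auto)
  finally show ?thesis
    by simp
qed (use finite_UNIV_card_ge_0[where ?'a = 'a] in auto)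

lemma ident:
  fixes X A B x a b :: "'a::field"
  shows "(X+B+A)*(x+b+a)^2 - (X+B)*(x+b)^2 - ((X+A)*(x+a)^2 - X*x^2)
    = 2*a*b*X + 2*(a*B+A*b)*x + ((B+A)*(b+a)^2 - B*b^2 - A*a^2)"
  by (simp add: power2_eq_square algebra_simps)

lemma core:
  fixes a b :: "'a::{field,finite}" and q :: nat
  assumes frob: "\<And>x y::'a. (x+y)^q = x^q+y^q" and qq: "\<And>x::'a. x^(q*q) = x" and q1: "q > 1"
  and two: "(2::'a) \<noteq> 0" and three: "(3::'a) \<noteq> 0" and n3: "\<not> 3 dvd q+1"
  and a: "a\<noteq>0" and b: "b\<noteq>0"
  shows "bij (\<lambda>x. ((x+b+a)^(q+2) - (x+b)^(q+2)) - ((x+a)^(q+2) - x^(q+2)))"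
proof -
  define g where "g = (\<lambda>x::'a. ((x+b+a)^(q+2) - (x+b)^(q+2)) - ((x+a)^(q+2) - x^(q+2)))"
  define L where "L = (\<lambda>x::'a. 2*a*b*x^q + 2*(a*b^q + a^q*b)*x)"
  have z0: "(0::'a)^q = 0" using q1 by simp
  have gx: "g x = L x + ((b^q+a^q)*(b+a)^2 - b^q*b^2 - a^q*a^2)" for x
  proof -
    have "g x = (x^q+b^q+a^q)*(x+b+a)^2 - (x^q+b^q)*(x+b)^2 - ((x^q+a^q)*(x+a)^2 - x^q*x^2)"
    proof -
      have pa: "y^(q+2) = y^q * y^2" for y :: 'a by (simp only: power_add)
      show ?thesis unfolding g_def by (simp only: pa frob)
    qed
    also have "\<dots> = L x + ((b^q+a^q)*(b+a)^2 - b^q*b^2 - a^q*a^2)"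
      unfolding L_def by (rule ident)
    finally show ?thesis .
  qed
  have subq: "(x-y)^q = x^q - y^q" for x y :: 'a
    using frob[of "x-y" y] by simp
  have negq: "(-x)^q = -(x^q)" for x :: 'a
    using frob[of x "-x"] z0 by (simp add: eq_neg_iff_add_eq_0 add.commute)
  have Lsub: "L x - L y = L (x - y)" for x y
    unfolding L_def subq by (simp add: algebra_simps)
  have norm: "(y^q/y)^q * (y^q/y) = 1" if "y \<noteq> 0" for y :: 'a
  proof -
    have "(y^q/y)^q = y / y^q"
      by (simp add: power_divide power_mult[symmetric] qq)
    thus ?thesis using that by simp
  qed
  have ker: "z = 0" if "L z = 0" for z
  proof (rule ccontr)
    assume z: "z \<noteq> 0"
    define U where "U = a^q/a"
    define V where "V = b^q/b"
    define W where "W = z^q/z"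
    have U0: "U \<noteq> 0" "V \<noteq> 0" using a b by (simp_all add: U_def V_def)
    have e1: "a*b*z^q + (a*b^q + a^q*b)*z = 0"
      using that two unfolding L_def
      by (metis (no_types, lifting) distrib_left mult.assoc mult_eq_0_iff)
    have "W + V + U = 0"
    proof -
      have "W + V + U = (a*b*z^q + (a*b^q + a^q*b)*z) / (a*b*z)"
        using a b z unfolding U_def V_def W_def by (simp add: field_simps)
      thus ?thesis using e1 by simp
    qed
    hence W: "W = -(U+V)" by (simp add: algebra_simps eq_neg_iff_add_eq_0)
    have nU: "U^q * U = 1" using norm[OF a] U_def by simp
    have nV: "V^q * V = 1" using norm[OF b] V_def by simp
    have nW: "W^q * W = 1" using norm[OF z] W_def by simp
    have "W^q = -(U^q+V^q)"
    proof -
      have "W^q = (-(U+V))^q" using W by simp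
      also have "\<dots> = -((U+V)^q)" by (rule negq)
      also have "\<dots> = -(U^q+V^q)" by (simp only: frob)
      finally show ?thesis .
    qed
    hence "(-(U^q + V^q)) * (-(U+V)) = 1" using nW W by simp
    moreover have "(U^q + V^q) * (U+V) = (-(U^q + V^q)) * (-(U+V))" by (rule minus_mult_minus[symmetric])
    ultimately have "(U^q + V^q) * (U+V) = 1" by (rule trans[rotated])
    moreover have "U^q = 1/U" "V^q = 1/V" using nU nV U0 by (simp_all add: field_simps)
    ultimately have "(1/U + 1/V) * (U+V) = 1" by simp
    hence eq: "U^2 + U*V + V^2 = 0" using U0 by (simp add: field_simps power2_eq_square)
    define t where "t = U/V"
    have t2: "t^2 + t + 1 = 0"
    proof -
      have "t^2 + t + 1 = (U^2 + U*V + V^2)/V^2" using U0 unfolding t_def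
        by (simp add: field_simps power2_eq_square)
      thus ?thesis using eq by simp
    qed
    have t3: "t^3 = 1"
    proof -
      have "t^3 - 1 = (t - 1)*(t^2+t+1)" by (simp add: algebra_simps power2_eq_square power3_eq_cube)
      thus ?thesis using t2 by simp
    qed
    have t1: "t \<noteq> 1"
    proof
      assume "t = 1" with t2 have "(3::'a) = 0" by simp
      with three show False by simp
    qed
    have tq: "t^(q+1) = 1"
    proof -
      have "t^q = U^q / V^q" unfolding t_def by (simp add: power_divide)
      also have "\<dots> = V/U" using \<open>U^q = 1/U\<close> \<open>V^q = 1/V\<close> U0 by (simp add: field_simps)
      finally show ?thesis using U0 unfolding t_def by simp
    qed
    have "q+1 = 3*((q+1) div 3) + (q+1) mod 3" by simp
    hence "t^(q+1) = (t^3)^((q+1) div 3) * t^((q+1) mod 3)"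
      by (metis power_add power_mult)
    hence ts: "t^((q+1) mod 3) = 1" using tq t3 by simp
    have "(q+1) mod 3 = 1 \<or> (q+1) mod 3 = 2" using n3 by presburger
    thus False
    proof
      assume "(q+1) mod 3 = 1" with ts t1 show False by simp
    next
      assume "(q+1) mod 3 = 2" with ts have "t^2 = 1" by simp
      hence "t^3 = t" by (simp add: power3_eq_cube power2_eq_square mult.assoc)
      with t3 t1 show False by simp
    qed
  qed
  have "inj g"
  proof (rule injI)
    fix x y assume "g x = g y"
    hence "L (x - y) = 0" using gx[of x] gx[of y] Lsub[of x y] by simp
    thus "x = y" using ker[of "x-y"] by simp
  qed
  hence "bij g" using finite_UNIV_inj_surj[of g] by (simp add: bij_def)
  thus ?thesis unfolding g_def .
qed

theorem theorem4:
  fixes p r :: nat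
  assumes "prime p" and "p \<ge> 5" and "r > 0"
    and "\<not> (3 dvd p ^ r + 1)"
    and "card (UNIV :: 'a set) = p ^ (2 * r)"
  shows "alltop (\<lambda>x::'a::{field,finite}. x ^ (p ^ r + 2))"
proof -
  have fin: "finite (UNIV::'a set)" by simp
  have cpos: "CHAR('a) > 0" using finite_imp_CHAR_pos[OF fin] .
  have cprime: "prime CHAR('a)" using prime_CHAR_semidom[OF cpos] .
  have "CHAR('a) dvd p^(2*r)" using CHAR_dvd_CARD[where 'a='a] assms(5) by simp
  hence "CHAR('a) dvd p" using prime_dvd_power cprime by blast
  hence charp: "CHAR('a) = p" using primes_dvd_imp_eq cprime assms(1) by blast
  have frob: "(x+y)^(p^r) = x^(p^r) + y^(p^r)" for x y :: 'a
    by (rule freshmans_dream') (simp_all add: charp assms(1))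
  have qq: "x^(p^r*p^r) = x" for x :: 'a
  proof -
    have "p^r*p^r = p^(2*r)" by (simp add: power_add[symmetric] mult_2)
    thus ?thesis using field_pow_card[of x] assms(5) by simp
  qed
  have q1: "p^r > 1" using assms(2,3) one_less_power[of p r] by simp
  have two: "(2::'a) \<noteq> 0"
  proof
    assume "(2::'a) = 0"
    hence "(of_nat 2::'a) = 0" by simp
    hence "p dvd 2" using of_nat_eq_0_iff_char_dvd[of 2, where 'a='a] charp by simp
    hence "p \<le> 2" using dvd_imp_le[of p 2] by simp
    thus False using assms(2) by simp
  qed
  have three: "(3::'a) \<noteq> 0"
  proof
    assume "(3::'a) = 0"
    hence "(of_nat 3::'a) = 0" by simp
    hence "p dvd 3" using of_nat_eq_0_iff_char_dvd[of 3, where 'a='a] charp by simp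
    hence "p \<le> 3" using dvd_imp_le[of p 3] by simp
    thus False using assms(2) by simp
  qed
  show ?thesis
    unfolding alltop_def planar_def diff_fun_def
  proof (intro allI impI)
    fix a b :: 'a assume "a \<noteq> 0" "b \<noteq> 0"
    from core[OF frob qq q1 two three assms(4) this]
    show "bij (\<lambda>x. (x + b + a) ^ (p ^ r + 2) - (x + b) ^ (p ^ r + 2) - ((x + a) ^ (p ^ r + 2) - x ^ (p ^ r + 2)))" .
  qed
qed

end
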